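(* Let $n\ge2$, let $T_1,\dots,T_n$ be distinct triangles in $E$, and let $S$ be the set of vertices of $\bigcap_{i=1}^nT_i$. There exists $\epsilon_0>0$ such that for every $0<\epsilon<\epsilon_0$, letting $P$ be the convex hull of all vertices of $T_1^{(1-\epsilon)},\dots,T_n^{(1-\epsilon)}$, for every $S'\subseteq S$ with $|S'|<n$ the pair $(P,S')$ is a YES instance of the intermediate polygon problem, i.e. there is a triangle $T$ with $S'\subseteq T\subseteq P$.
   Context: For $d>0$ let $C_d=\{(x,y)\in\mathbb{R}^2: x^2+y^2\le d\}$, and $C=C_1$. $E$ is the set of all equilateral triangles $T\subseteq C$ whose vertices lie on the boundary of $C$. For $T\in E$, $T^{(1-\epsilon)}$ denotes the scaling of $T$ about the origin such that the vertices of $T^{(1-\epsilon)}$ lie on the boundary of $C_{1-\epsilon}$. An instance of the intermediate polygon problem is a polygon $P\subseteq\mathbb{R}^2$ and a finite point set; it is a YES instance if some triangle $T$ satisfies (point set) $\subseteq T\subseteq P$. *)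

theory Defs
  imports "HOL-Analysis.Analysis"
begin

text \<open>The plane R^2 is modelled as the complex numbers.
  C_d = {z. |z|^2 <= d}, a disk of radius sqrt d.\<close>

definition disk :: "real \<Rightarrow> complex set" where
  "disk d = {z. (Re z)^2 + (Im z)^2 \<le> d}"

definition CC :: "complex set" where
  "CC = disk 1"

definition is_triangle :: "complex set \<Rightarrow> bool" where
  "is_triangle T \<longleftrightarrow> (\<exists>a b c. \<not> collinear {a, b, c} \<and> T = convex hull {a, b, c})"

definition EE :: "complex set set" where
  "EE = {T. T \<subseteq> CC \<and> (\<exists>a b c. a \<in> frontier CC \<and> b \<in> frontier CC \<and> c \<in> frontier CC \<and>
            a \<noteq> b \<and> dist a b = dist b c \<and> dist b c = dist c a \<and>
            T = convex hull {a, b, c})}"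

definition vertices :: "complex set \<Rightarrow> complex set" where
  "vertices K = {v. v extreme_point_of K}"

text \<open>T^(1-eps): scaling of T about the origin so that its vertices lie on the
  boundary of C_(1-eps), i.e. scaling by the factor sqrt (1 - eps).\<close>
definition shrink :: "real \<Rightarrow> complex set \<Rightarrow> complex set" where
  "shrink eps T = (\<lambda>z. complex_of_real (sqrt (1 - eps)) * z) ` T"

definition ipp_yes :: "complex set \<Rightarrow> complex set \<Rightarrow> bool" where
  "ipp_yes P Q \<longleftrightarrow> (\<exists>T. is_triangle T \<and> Q \<subseteq> T \<and> T \<subseteq> P)"

end

theory Submission
  imports Defs
begin


definition w1 :: complex where "w1 = Complex (-1/2) (sqrt 3 / 2)"
definition w2 :: complex where "w2 = Complex (-1/2) (- sqrt 3 / 2)"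
definition lam :: "complex \<Rightarrow> complex \<Rightarrow> real" where "lam z V = (1 + 2 * (z \<bullet> V)) / 3"
definition verts :: "complex \<Rightarrow> complex set" where "verts A = {A, A*w1, A*w2}"
definition tri :: "complex \<Rightarrow> complex set" where "tri A = convex hull (verts A)"

lemma s3: "sqrt 3 * sqrt 3 = (3::real)" by simp

lemma w1_w1: "w1 * w1 = w2" by (simp add: w1_def w2_def complex_eq_iff)
lemma w1_w2: "w1 * w2 = 1" by (simp add: w1_def w2_def complex_eq_iff)
lemma w2_w2: "w2 * w2 = w1" by (simp add: w1_def w2_def complex_eq_iff)
lemma w_sum: "1 + w1 + w2 = 0" by (simp add: w1_def w2_def complex_eq_iff)

lemma unit_coords: "norm (A::complex) = 1 \<Longrightarrow> (Re A)^2 + (Im A)^2 = 1"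
  by (simp add: cmod_def)

lemma vert_inner:
  assumes "norm A = 1"
  shows "A \<bullet> A = 1" "A \<bullet> (A*w1) = -1/2" "A \<bullet> (A*w2) = -1/2" "(A*w1) \<bullet> (A*w2) = -1/2"
    "(A*w1) \<bullet> (A*w1) = 1" "(A*w2) \<bullet> (A*w2) = 1"
    "(A*w1) \<bullet> A = -1/2" "(A*w2) \<bullet> A = -1/2" "(A*w2) \<bullet> (A*w1) = -1/2"
  using unit_coords[OF assms]
  by (simp_all add: inner_complex_def w1_def w2_def algebra_simps power2_eq_square; 
      simp add: power2_eq_square[symmetric])+

lemma vsum: "A + A*w1 + A*w2 = 0"
proof -
  have "A + A*w1 + A*w2 = A * (1 + w1 + w2)" by (simp add: algebra_simps)
  thus ?thesis by (simp add: w_sum)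
qed

lemma dec:
  assumes "norm A = 1"
  shows "z = lam z A *\<^sub>R A + lam z (A*w1) *\<^sub>R (A*w1) + lam z (A*w2) *\<^sub>R (A*w2)"
  using unit_coords[OF assms]
  apply (simp add: complex_eq_iff lam_def inner_complex_def w1_def w2_def algebra_simps)
  apply (simp add: field_simps)
  apply (rule conjI)
   apply algebra+
  done



lemma inner_vsum: "z \<bullet> A + z \<bullet> (A*w1) + z \<bullet> (A*w2) = 0"
  by (metis inner_add_right inner_zero_right vsum)

lemma lam_sum: "lam z A + lam z (A*w1) + lam z (A*w2) = 1"
  using inner_vsum[of z A] by (simp add: lam_def field_simps)

lemma lam_bary:
  assumes "norm A = 1" "z = u *\<^sub>R A + v *\<^sub>R (A*w1) + w *\<^sub>R (A*w2)" "u+v+w = 1"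
  shows "lam z A = u" "lam z (A*w1) = v" "lam z (A*w2) = w"
  using assms vert_inner[OF assms(1)]
  by (simp_all add: lam_def inner_add_left inner_scaleR_left field_simps)

lemma tri_iff:
  assumes "norm A = 1"
  shows "z \<in> tri A \<longleftrightarrow> (0 \<le> lam z A \<and> 0 \<le> lam z (A*w1) \<and> 0 \<le> lam z (A*w2))"
proof
  assume "z \<in> tri A"
  then obtain u v w where "z = u *\<^sub>R A + v *\<^sub>R (A*w1) + w *\<^sub>R (A*w2)" "u+v+w=1" "0\<le>u" "0\<le>v" "0\<le>w"
    unfolding tri_def verts_def convex_hull_3 by blast
  thus "0 \<le> lam z A \<and> 0 \<le> lam z (A*w1) \<and> 0 \<le> lam z (A*w2)"
    using lam_bary[OF assms] by metis
next
  assume "0 \<le> lam z A \<and> 0 \<le> lam z (A*w1) \<and> 0 \<le> lam z (A*w2)"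
  thus "z \<in> tri A"
    unfolding tri_def verts_def convex_hull_3 using dec[OF assms, of z] lam_sum[of z A] by blast
qed

lemma verts_rot1: "verts (A*w1) = verts A"
  unfolding verts_def by (auto simp: mult.assoc w1_w1 w1_w2)

lemma verts_rot2: "verts (A*w2) = verts A"
  unfolding verts_def by (auto simp: mult.assoc w1_w2 w2_w2 mult.commute[of w2 w1])

lemma mem_verts: "D \<in> verts A \<Longrightarrow> verts D = verts A"
  unfolding verts_def using verts_rot1 verts_rot2 unfolding verts_def by auto

lemma shared:
  assumes "V \<in> verts A" "V \<in> verts D"
  shows "verts A = verts D"
proof -
  from assms(2) have "D = V \<or> D = V*w2 \<or> D = V*w1"
    unfolding verts_def by (auto simp: mult.assoc w1_w2 w2_w2 w1_w1 mult.commute[of w2 w1])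
  moreover have "verts V = verts A" using mem_verts[OF assms(1)] .
  ultimately have "D \<in> verts A" unfolding verts_def[of V]
    by (metis insertCI verts_def)
  thus ?thesis using mem_verts by metis
qed

lemma two_sol:
  fixes s u1 u2 u3 :: complex
  assumes "s \<noteq> 0" "norm u1 = 1" "norm u2 = 1" "norm u3 = 1"
    "s \<bullet> u1 = c" "s \<bullet> u2 = c" "s \<bullet> u3 = c"
  shows "u1 = u2 \<or> u1 = u3 \<or> u2 = u3"
proof -
  define p q where "p = Re s" "q = Im s"
  have pq: "p^2 + q^2 > 0" using assms(1) unfolding p_q_def
    by (simp add: complex_eq_iff sum_power2_gt_zero_iff)
  define t where "t u = Im u * p - Re u * q" for u
  have sq: "(t u)^2 = p^2 + q^2 - c^2" if "norm u = 1" "s \<bullet> u = c" for u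
  proof -
    have "(Re u)^2 + (Im u)^2 = 1" using unit_coords[OF that(1)] .
    moreover have "p * Re u + q * Im u = c" using that(2) unfolding p_q_def inner_complex_def .
    moreover have "(p * Re u + q * Im u)^2 + (t u)^2 = ((Re u)^2 + (Im u)^2) * (p^2+q^2)"
      unfolding t_def by algebra
    ultimately show ?thesis by simp
  qed
  have eq: "u = u'" if "norm u = 1" "s \<bullet> u = c" "norm u' = 1" "s \<bullet> u' = c" "t u = t u'" for u u'
  proof -
    have e1: "p * (Re u - Re u') + q * (Im u - Im u') = 0"
      using that(2,4) unfolding p_q_def inner_complex_def by (simp add: algebra_simps)
    have e2: "p * (Im u - Im u') - q * (Re u - Re u') = 0" using that(5) unfolding t_def by (simp add: algebra_simps)
    have "(p^2+q^2) * (Re u - Re u') = p * (p * (Re u - Re u') + q * (Im u - Im u')) - q * (p * (Im u - Im u') - q * (Re u - Re u'))"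
      by algebra
    hence "(p^2+q^2) * (Re u - Re u') = 0" using e1 e2 by simp
    moreover have "(p^2+q^2) * (Im u - Im u') = q * (p * (Re u - Re u') + q * (Im u - Im u')) + p * (p * (Im u - Im u') - q * (Re u - Re u'))"
      by algebra
    hence "(p^2+q^2) * (Im u - Im u') = 0" using e1 e2 by simp
    ultimately show ?thesis using pq by (auto simp: complex_eq_iff)
  qed
  have "(t u1)^2 = (t u2)^2" "(t u1)^2 = (t u3)^2" using sq assms by auto
  hence "t u1 = t u2 \<or> t u1 = t u3 \<or> t u2 = t u3"
    by (metis power2_eq_iff)
  thus ?thesis using eq assms by metis
qed



lemma norm_w1: "norm w1 = 1" by (simp add: w1_def cmod_def power_divide)
lemma norm_w2: "norm w2 = 1" by (simp add: w2_def cmod_def power_divide)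

lemma norm_verts: "norm A = 1 \<Longrightarrow> V \<in> verts A \<Longrightarrow> norm V = 1"
  unfolding verts_def by (auto simp: norm_mult norm_w1 norm_w2)

lemma inner_lam: "z \<bullet> V = (3 * lam z V - 1) / 2"
  by (simp add: lam_def field_simps)

lemma unit_in_tri:
  assumes A: "norm A = 1" and z: "norm z = 1" "z \<in> tri A"
  shows "z \<in> verts A"
proof -
  define u v w where "u = lam z A" "v = lam z (A*w1)" "w = lam z (A*w2)"
  have nn: "0 \<le> u" "0 \<le> v" "0 \<le> w" using z(2) tri_iff[OF A] unfolding u_v_w_def by auto
  have s: "u + v + w = 1" using lam_sum unfolding u_v_w_def by simp
  have d: "z = u *\<^sub>R A + v *\<^sub>R (A*w1) + w *\<^sub>R (A*w2)" using dec[OF A] unfolding u_v_w_def .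
  have "z \<bullet> z = u * (z \<bullet> A) + v * (z \<bullet> (A*w1)) + w * (z \<bullet> (A*w2))"
    by (subst (2) d) (simp add: inner_add_right)
  moreover have "z \<bullet> z = 1" using z(1) by (simp add: dot_square_norm)
  ultimately have "1 = u * ((3 * u - 1)/2) + v * ((3 * v - 1)/2) + w * ((3 * w - 1)/2)"
    unfolding u_v_w_def inner_lam by simp
  hence "u * v + v * w + u * w = 0" using s by algebra
  hence "(u = 0 \<and> v = 0) \<or> (u = 0 \<and> w = 0) \<or> (v = 0 \<and> w = 0)" using nn
    by (smt (verit) mult_nonneg_nonneg mult_pos_pos)
  thus ?thesis using d s unfolding verts_def by auto
qed

lemma sumsq_real:
  fixes a b c d t :: real
  assumes "t*t = 3" "a^2+b^2 = 1" "c^2+d^2=1"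
  shows "(a*c+b*d)^2 + ((-(a/2) - b*t/2)*c + (a*t/2 - b/2)*d)^2 + ((-(a/2) + b*t/2)*c + (-(a*t/2) - b/2)*d)^2 = 3/2"
proof -
  have "(a*c+b*d)^2 + ((-(a/2) - b*t/2)*c + (a*t/2 - b/2)*d)^2 + ((-(a/2) + b*t/2)*c + (-(a*t/2) - b/2)*d)^2
     = 3/2 * ((a^2+b^2)*(c^2+d^2)) + (t*t - 3) * ((b*c - a*d)^2/2)"
    by (simp add: field_simps power2_eq_square; algebra)
  thus ?thesis using assms by simp
qed

lemma sumsq:
  assumes "norm E = 1" "norm C = 1"
  shows "(E \<bullet> C)^2 + ((E*w1) \<bullet> C)^2 + ((E*w2) \<bullet> C)^2 = 3/2"
  using sumsq_real[OF s3 unit_coords[OF assms(1)] unit_coords[OF assms(2)]]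
  by (simp add: inner_complex_def w1_def w2_def algebra_simps)

lemma three_real:
  fixes x y z :: real
  assumes "x+y+z = 0" "x^2+y^2+z^2 = 3/2" "x \<ge> -1/2" "y \<ge> -1/2" "z \<ge> -1/2"
  shows "x = -1/2 \<or> y = -1/2 \<or> z = -1/2"
proof (rule ccontr)
  assume "\<not> ?thesis"
  hence p: "x + 1/2 > 0" "y + 1/2 > 0" "z+1/2 > 0" using assms by auto
  have "(x+1/2)*(y+1/2) + (y+1/2)*(z+1/2) + (x+1/2)*(z+1/2) = ((x+y+z)^2 - (x^2+y^2+z^2))/2 + (x+y+z) + 3/4"
    by algebra
  also have "\<dots> = 0" by (simp only: assms(1) assms(2)) simp
  finally show False using p by (smt (verit) mult_pos_pos)
qed

lemma exists_beyond:
  assumes A: "norm A = 1" and E: "norm E = 1" and dis: "verts A \<inter> verts E = {}"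
  shows "\<exists>X\<in>verts E. lam X (A*w2) < 0"
proof (rule ccontr)
  assume "\<not> ?thesis"
  hence ge: "\<forall>X\<in>verts E. X \<bullet> (A*w2) \<ge> -1/2" unfolding lam_def by force
  have C: "norm (A*w2) = 1" using A by (simp add: norm_mult norm_w2)
  have s0: "(E \<bullet> (A*w2)) + ((E*w1) \<bullet> (A*w2)) + ((E*w2) \<bullet> (A*w2)) = 0"
    using inner_vsum[of "A*w2" E] by (simp add: inner_commute)
  obtain Y where Y: "Y \<in> verts E" "Y \<bullet> (A*w2) = -1/2"
    using three_real[OF s0 sumsq[OF E C]] ge unfolding verts_def by auto
  have nY: "norm Y = 1" using norm_verts[OF E Y(1)] .
  have "A = A*w1 \<or> A = Y \<or> A*w1 = Y"
    apply (rule two_sol[of "A*w2" A "A*w1" Y "-1/2"])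
    using A C nY Y(2) vert_inner[OF A] norm_w1
    by (auto simp: inner_commute norm_mult)
  moreover have "A \<noteq> A*w1"
  proof
    assume "A = A*w1"
    hence "A * (w1 - 1) = 0" by (simp add: algebra_simps)
    moreover have "w1 - 1 \<noteq> 0" by (simp add: w1_def complex_eq_iff)
    ultimately show False using A by auto
  qed
  ultimately have "Y \<in> verts A" unfolding verts_def by auto
  thus False using Y(1) dis by auto
qed

lemma noncol:
  fixes a b c :: complex
  assumes "Im ((b - a) * cnj (c - a)) \<noteq> 0"
  shows "\<not> collinear {a, b, c}"
proof
  assume "collinear {a,b,c}"
  then obtain u where u: "\<forall>x\<in>{a,b,c}. \<forall>y\<in>{a,b,c}. \<exists>c. x - y = c *\<^sub>R u"
    unfolding collinear_def by blast
  then obtain c1 c2 where "b - a = c1 *\<^sub>R u" "c - a = c2 *\<^sub>R u" by blast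
  hence "Im ((b - a) * cnj (c - a)) = 0" by (simp add: algebra_simps)
  thus False using assms by simp
qed

lemma im_ident:
  assumes "norm A = 1"
  shows "Im ((z - A) * cnj (A*w2 - A)) = lam z (A*w1) * (-(3 * sqrt 3 / 2))"
  using unit_coords[OF assms] s3
  apply (simp add: lam_def inner_complex_def w1_def w2_def algebra_simps)
  apply algebra
  done



lemma CC_eq: "CC = cball 0 1"
  by (auto simp: CC_def disk_def cmod_def)

lemma frontier_CC: "frontier CC = sphere 0 1"
  by (simp add: CC_eq)

lemma equi_real:
  fixes x y p q :: real
  assumes "x^2+y^2=1" "p^2+q^2=1" "(x-1)^2+y^2 = (p-x)^2+(q-y)^2" "(p-x)^2+(q-y)^2 = (1-p)^2+q^2"
    "\<not>(x=1 \<and> y=0)"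
  shows "x = -1/2 \<and> p = -1/2 \<and> ((y = sqrt 3/2 \<and> q = -sqrt 3/2) \<or> (y = -sqrt 3/2 \<and> q = sqrt 3/2))"
proof -
  have xp: "x = p" using assms(1-4) by (simp add: power2_eq_square algebra_simps)
  have "y^2 = q^2" using assms(1,2) xp by simp
  hence "q = y \<or> q = -y" by (metis power2_eq_iff)
  moreover have "q \<noteq> y"
  proof
    assume "q = y"
    hence "x = 1" using assms(1,3) xp by (simp add: power2_eq_square algebra_simps)
    hence "y = 0" using assms(1) by simp
    thus False using \<open>x=1\<close> assms(5) by simp
  qed
  ultimately have qy: "q = -y" by simp
  have "4*y^2 = 2 - 2*x" using assms(1,3) xp qy by (simp add: power2_eq_square algebra_simps)
  hence "(2*x+1)*(x-1) = 0" using assms(1) by (simp add: algebra_simps power2_eq_square)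
  moreover have "x \<noteq> 1" using assms(1,5) by auto
  ultimately have x: "x = -1/2" by auto
  hence "y^2 = (sqrt 3/2)^2" using assms(1) by (simp add: power_divide)
  hence "y = sqrt 3/2 \<or> y = -(sqrt 3/2)" by (metis power2_eq_iff)
  thus ?thesis using x xp qy by auto
qed

lemma equi:
  fixes a b c :: complex
  assumes "norm a = 1" "norm b = 1" "norm c = 1" "a \<noteq> b"
    "dist a b = dist b c" "dist b c = dist c a"
  shows "(b = a*w1 \<and> c = a*w2) \<or> (b = a*w2 \<and> c = a*w1)"
proof -
  have aa: "cnj a * a = 1" using assms(1)
    by (simp add: complex_eq_iff cmod_def power2_eq_square algebra_simps)
  define u v where "u = b * cnj a" "v = c * cnj a"
  have bu: "b = u * a" "c = v * a" using aa unfolding u_v_def by (simp_all add: mult.assoc)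
  have nu: "norm u = 1" "norm v = 1" using assms unfolding u_v_def by (simp_all add: norm_mult)
  have d1: "norm (u - 1) = norm (v - u)" "norm (v - u) = norm (1 - v)"
  proof -
    have "norm (u - 1) = norm ((u - 1) * a)" using assms(1) by (simp add: norm_mult)
    also have "\<dots> = dist a b" by (simp add: bu dist_norm algebra_simps norm_minus_commute)
    finally have 1: "norm (u - 1) = dist a b" .
    have "norm (v - u) = norm ((v - u) * a)" using assms(1) by (simp add: norm_mult)
    also have "\<dots> = dist b c" by (simp add: bu dist_norm algebra_simps norm_minus_commute)
    finally have 2: "norm (v - u) = dist b c" .
    have "norm (1 - v) = norm ((1 - v) * a)" using assms(1) by (simp add: norm_mult)
    also have "\<dots> = dist c a" by (simp add: bu dist_norm algebra_simps norm_minus_commute)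
    finally have 3: "norm (1 - v) = dist c a" .
    show "norm (u - 1) = norm (v - u)" "norm (v - u) = norm (1 - v)" using 1 2 3 assms(5,6) by auto
  qed
  have sq: "(norm z)^2 = (Re z)^2 + (Im z)^2" for z by (simp add: cmod_power2)
  have u1: "u \<noteq> 1" using bu assms(4) by auto
  have r: "Re u = -1/2 \<and> Re v = -1/2 \<and> ((Im u = sqrt 3/2 \<and> Im v = -sqrt 3/2) \<or> (Im u = -sqrt 3/2 \<and> Im v = sqrt 3/2))"
    apply (rule equi_real)
    using unit_coords[OF nu(1)] unit_coords[OF nu(2)] 
      arg_cong[OF d1(1), of "\<lambda>t. t^2"] arg_cong[OF d1(2), of "\<lambda>t. t^2"] u1
    by (simp_all add: sq complex_eq_iff)
  hence "(u = w1 \<and> v = w2) \<or> (u = w2 \<and> v = w1)" by (auto simp: w1_def w2_def complex_eq_iff)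
  thus ?thesis using bu by (auto simp: mult.commute)
qed

lemma EE_tri:
  assumes "T \<in> EE"
  shows "\<exists>A. norm A = 1 \<and> T = tri A"
proof -
  obtain a b c where h: "a \<in> frontier CC" "b \<in> frontier CC" "c \<in> frontier CC" "a \<noteq> b"
    "dist a b = dist b c" "dist b c = dist c a" "T = convex hull {a, b, c}"
    using assms unfolding EE_def by blast
  have n: "norm a = 1" "norm b = 1" "norm c = 1" using h(1-3) unfolding frontier_CC by auto
  from equi[OF n h(4-6)] have "{a,b,c} = verts a" unfolding verts_def by auto
  thus ?thesis using h(7) n unfolding tri_def by auto
qed



definition bad :: "complex \<Rightarrow> complex \<Rightarrow> bool" where
  "bad z A \<longleftrightarrow> (\<exists>V\<in>verts A. z \<bullet> V = -1/2)"

lemma three_elems: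
  assumes "finite X" "card X \<ge> 3"
  obtains x y z where "x \<in> X" "y \<in> X" "z \<in> X" "x \<noteq> y" "x \<noteq> z" "y \<noteq> z"
proof -
  obtain Y where "Y \<subseteq> X" "card Y = 3" using obtain_subset_with_card_n[OF assms(2)] by blast
  thus ?thesis using that unfolding card_3_iff by blast
qed

lemma bad_count:
  assumes fin: "finite I" and nA: "\<forall>i\<in>I. norm (A i) = 1"
    and dis: "\<forall>i\<in>I. \<forall>j\<in>I. verts (A i) \<inter> verts (A j) \<noteq> {} \<longrightarrow> i = j"
  shows "card {i\<in>I. bad s (A i)} \<le> 2"
proof (rule ccontr)
  assume "\<not> ?thesis"
  hence ge: "card {i\<in>I. bad s (A i)} \<ge> 3" by simp
  have fX: "finite {i\<in>I. bad s (A i)}" using fin by simp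
  obtain i j k where ijk: "i \<in> {i\<in>I. bad s (A i)}" "j \<in> {i\<in>I. bad s (A i)}" "k \<in> {i\<in>I. bad s (A i)}"
    "i \<noteq> j" "i \<noteq> k" "j \<noteq> k"
    by (rule three_elems[OF fX ge])
  obtain Vi where Vi: "Vi \<in> verts (A i)" "s \<bullet> Vi = -1/2" using ijk(1) unfolding bad_def by auto
  obtain Vj where Vj: "Vj \<in> verts (A j)" "s \<bullet> Vj = -1/2" using ijk(2) unfolding bad_def by auto
  obtain Vk where Vk: "Vk \<in> verts (A k)" "s \<bullet> Vk = -1/2" using ijk(3) unfolding bad_def by auto
  have s0: "s \<noteq> 0" using Vi(2) by auto
  have "Vi = Vj \<or> Vi = Vk \<or> Vj = Vk"
    apply (rule two_sol[OF s0 _ _ _ Vi(2) Vj(2) Vk(2)])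
    using norm_verts nA ijk Vi Vj Vk by auto
  thus False using dis ijk Vi Vj Vk by blast
qed

lemma pigeon:
  fixes P :: "'a \<Rightarrow> nat \<Rightarrow> bool"
  assumes fin: "finite S" and c: "card S < n" and b: "\<forall>s\<in>S. card {i\<in>{1..n}. P s i} \<le> 2"
  shows "\<exists>i\<in>{1..n}. card {s\<in>S. P s i} \<le> 1"
proof (rule ccontr)
  assume "\<not> ?thesis"
  hence ge: "\<forall>i\<in>{1..n}. card {s\<in>S. P s i} \<ge> 2" by auto
  have "(\<Sum>i\<in>{1..n}. card {s\<in>S. P s i}) = (\<Sum>i\<in>{1..n}. \<Sum>s\<in>S. of_bool (P s i))"
    using fin by (auto intro!: sum.cong simp: Int_def)
  also have "\<dots> = (\<Sum>s\<in>S. \<Sum>i\<in>{1..n}. of_bool (P s i))" by (rule sum.swap)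
  also have "\<dots> = (\<Sum>s\<in>S. card {i\<in>{1..n}. P s i})"
    by (auto intro!: sum.cong simp: Int_def)
  also have "\<dots> \<le> (\<Sum>s\<in>S. 2)" using b by (intro sum_mono) auto
  also have "\<dots> = 2 * card S" by simp
  finally have 1: "(\<Sum>i\<in>{1..n}. card {s\<in>S. P s i}) \<le> 2 * card S" .
  have "(\<Sum>i\<in>{1..n}. (2::nat)) \<le> (\<Sum>i\<in>{1..n}. card {s\<in>S. P s i})" using ge by (intro sum_mono) auto
  hence "2 * n \<le> 2 * card S" using 1 by simp
  thus False using c by simp
qed



lemma sqrt_lim: "((\<lambda>\<epsilon>::real. sqrt (1 - \<epsilon>)) \<longlongrightarrow> 1) (at_right 0)"
proof -
  have "((\<lambda>\<epsilon>::real. sqrt (1 - \<epsilon>)) \<longlongrightarrow> sqrt (1 - 0)) (at_right 0)"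
    by (intro tendsto_intros)
  thus ?thesis by simp
qed

lemma ev_r_pos: "\<forall>\<^sub>F \<epsilon> in at_right (0::real). sqrt (1 - \<epsilon>) > 0"
  using order_tendstoD(1)[OF sqrt_lim, of 0] by simp

lemma L_lim: "((\<lambda>\<epsilon>. lam ((1 / sqrt (1 - \<epsilon>)) *\<^sub>R z) V) \<longlongrightarrow> lam z V) (at_right 0)"
proof -
  have "((\<lambda>\<epsilon>. (1 + 2 * ((1 / sqrt (1 - \<epsilon>)) * (z \<bullet> V))) / 3) \<longlongrightarrow> (1 + 2 * ((1 / 1) * (z \<bullet> V))) / 3) (at_right 0)"
    by (intro tendsto_intros sqrt_lim) auto
  thus ?thesis by (simp add: lam_def)
qed

lemma core_alg:
  fixes A0 X y :: complex
  assumes nA: "norm A0 = 1" and dpos: "d \<noteq> 0"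
    and d: "d = 1 - \<tau> + \<tau> * lam X (A0*w1)"
  defines "\<beta> \<equiv> lam y (A0*w1) / d"
  defines "\<alpha> \<equiv> lam y A0 - \<beta> * \<tau> * lam X A0"
  defines "\<gamma> \<equiv> lam y (A0*w2) - \<beta> * \<tau> * lam X (A0*w2)"
  shows "y = \<alpha> *\<^sub>R A0 + \<beta> *\<^sub>R ((1 - \<tau>) *\<^sub>R (A0*w1) + \<tau> *\<^sub>R X) + \<gamma> *\<^sub>R (A0*w2)"
    "\<alpha> + \<beta> + \<gamma> = 1"
proof -
  define xA xB xC where "xA = lam X A0" "xB = lam X (A0*w1)" "xC = lam X (A0*w2)"
  define lA lB lC where "lA = lam y A0" "lB = lam y (A0*w1)" "lC = lam y (A0*w2)"
  have X: "X = xA *\<^sub>R A0 + xB *\<^sub>R (A0*w1) + xC *\<^sub>R (A0*w2)" using dec[OF nA] unfolding xA_xB_xC_def .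
  have Y: "y = lA *\<^sub>R A0 + lB *\<^sub>R (A0*w1) + lC *\<^sub>R (A0*w2)" using dec[OF nA] unfolding lA_lB_lC_def .
  have xs: "xA + xB + xC = 1" using lam_sum unfolding xA_xB_xC_def by simp
  have ls: "lA + lB + lC = 1" using lam_sum unfolding lA_lB_lC_def by simp
  have lB: "lB = \<beta> * d" unfolding \<beta>_def lA_lB_lC_def using dpos by simp
  have a: "\<alpha> = lA - \<beta> * \<tau> * xA" unfolding \<alpha>_def lA_lB_lC_def xA_xB_xC_def by simp
  have g: "\<gamma> = lC - \<beta> * \<tau> * xC" unfolding \<gamma>_def lA_lB_lC_def xA_xB_xC_def by simp
  have dd: "d = 1 - \<tau> + \<tau> * xB" using d unfolding xA_xB_xC_def by simp
  show "y = \<alpha> *\<^sub>R A0 + \<beta> *\<^sub>R ((1 - \<tau>) *\<^sub>R (A0*w1) + \<tau> *\<^sub>R X) + \<gamma> *\<^sub>R (A0*w2)"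
    unfolding a g Y lB dd by (subst X) (simp add: algebra_simps)
  show "\<alpha> + \<beta> + \<gamma> = 1"
    using ls xs unfolding a g lB dd by algebra
qed



lemma core:
  fixes A0 X :: complex
  assumes nA: "norm A0 = 1" and fin: "finite S'" and dpos: "d > 0"
    and d: "d = 1 - \<tau> + \<tau> * lam X (A0*w1)"
    and pos: "\<forall>z\<in>S'. lam z (A0*w1) / d > 0 \<and> lam z A0 - lam z (A0*w1)/d * \<tau> * lam X A0 > 0
                 \<and> lam z (A0*w2) - lam z (A0*w1)/d * \<tau> * lam X (A0*w2) > 0"
  shows "\<forall>\<^sub>F \<epsilon> in at_right 0. \<forall>z\<in>S'. z \<in> convex hull {sqrt (1-\<epsilon>) *\<^sub>R A0,
            sqrt (1-\<epsilon>) *\<^sub>R ((1-\<tau>) *\<^sub>R (A0*w1) + \<tau> *\<^sub>R X), sqrt (1-\<epsilon>) *\<^sub>R (A0*w2)}"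
proof (rule eventually_ball_finite[OF fin], rule ballI)
  fix z assume z: "z \<in> S'"
  define y where "y \<epsilon> = (1 / sqrt (1 - \<epsilon>)) *\<^sub>R z" for \<epsilon> :: real
  define \<beta> where "\<beta> \<epsilon> = lam (y \<epsilon>) (A0*w1) / d" for \<epsilon>
  define \<alpha> where "\<alpha> \<epsilon> = lam (y \<epsilon>) A0 - \<beta> \<epsilon> * \<tau> * lam X A0" for \<epsilon>
  define \<gamma> where "\<gamma> \<epsilon> = lam (y \<epsilon>) (A0*w2) - \<beta> \<epsilon> * \<tau> * lam X (A0*w2)" for \<epsilon>
  have tb: "(\<beta> \<longlongrightarrow> lam z (A0*w1) / d) (at_right 0)"
    unfolding \<beta>_def y_def using dpos by (intro tendsto_intros L_lim) auto
  have ta: "(\<alpha> \<longlongrightarrow> lam z A0 - lam z (A0*w1) / d * \<tau> * lam X A0) (at_right 0)"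
    unfolding \<alpha>_def by (intro tendsto_intros tb) (unfold y_def, rule L_lim)
  have tg: "(\<gamma> \<longlongrightarrow> lam z (A0*w2) - lam z (A0*w1) / d * \<tau> * lam X (A0*w2)) (at_right 0)"
    unfolding \<gamma>_def by (intro tendsto_intros tb) (unfold y_def, rule L_lim)
  have ev: "\<forall>\<^sub>F \<epsilon> in at_right 0. \<alpha> \<epsilon> > 0 \<and> \<beta> \<epsilon> > 0 \<and> \<gamma> \<epsilon> > 0 \<and> sqrt (1 - \<epsilon>) > 0"
    using order_tendstoD(1)[OF ta] order_tendstoD(1)[OF tb] order_tendstoD(1)[OF tg] ev_r_pos pos z
    by (auto intro!: eventually_conj)
  show "\<forall>\<^sub>F \<epsilon> in at_right 0. z \<in> convex hull {sqrt (1-\<epsilon>) *\<^sub>R A0,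
            sqrt (1-\<epsilon>) *\<^sub>R ((1-\<tau>) *\<^sub>R (A0*w1) + \<tau> *\<^sub>R X), sqrt (1-\<epsilon>) *\<^sub>R (A0*w2)}"
  proof (rule eventually_mono[OF ev])
    fix \<epsilon> assume h: "\<alpha> \<epsilon> > 0 \<and> \<beta> \<epsilon> > 0 \<and> \<gamma> \<epsilon> > 0 \<and> sqrt (1 - \<epsilon>) > 0"
    define r where "r = sqrt (1 - \<epsilon>)"
    have r: "r > 0" using h r_def by simp
    note ca = core_alg[OF nA _ d, of "y \<epsilon>"]
    have e1: "y \<epsilon> = \<alpha> \<epsilon> *\<^sub>R A0 + \<beta> \<epsilon> *\<^sub>R ((1 - \<tau>) *\<^sub>R (A0*w1) + \<tau> *\<^sub>R X) + \<gamma> \<epsilon> *\<^sub>R (A0*w2)"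
      using ca(1) dpos unfolding \<alpha>_def \<beta>_def \<gamma>_def by simp
    have e2: "\<alpha> \<epsilon> + \<beta> \<epsilon> + \<gamma> \<epsilon> = 1"
      using ca(2) dpos unfolding \<alpha>_def \<beta>_def \<gamma>_def by simp
    have "z = r *\<^sub>R y \<epsilon>" unfolding y_def r_def using r r_def by simp
    hence "z = \<alpha> \<epsilon> *\<^sub>R (r *\<^sub>R A0) + \<beta> \<epsilon> *\<^sub>R (r *\<^sub>R ((1 - \<tau>) *\<^sub>R (A0*w1) + \<tau> *\<^sub>R X)) + \<gamma> \<epsilon> *\<^sub>R (r *\<^sub>R (A0*w2))"
      using e1 by (simp add: scaleR_add_right mult.commute mult.left_commute)
    thus "z \<in> convex hull {sqrt (1-\<epsilon>) *\<^sub>R A0,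
            sqrt (1-\<epsilon>) *\<^sub>R ((1-\<tau>) *\<^sub>R (A0*w1) + \<tau> *\<^sub>R X), sqrt (1-\<epsilon>) *\<^sub>R (A0*w2)}"
      unfolding convex_hull_3 r_def[symmetric] using h e2 by (intro CollectI exI[of _ "\<alpha> \<epsilon>"] exI[of _ "\<beta> \<epsilon>"] exI[of _ "\<gamma> \<epsilon>"]) auto
  qed
qed



lemma shrink_eq: "shrink \<epsilon> T = (\<lambda>z. sqrt (1-\<epsilon>) *\<^sub>R z) ` T"
  unfolding shrink_def by (simp add: scaleR_conv_of_real)

lemma tri_compact: "compact (tri A)" unfolding tri_def verts_def
  by (rule compact_convex_hull) simp

lemma vert_in_P:
  assumes k: "k \<in> I" and T: "T k = tri (A k)" and V: "V \<in> verts (A k)"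
  shows "sqrt (1-\<epsilon>) *\<^sub>R V \<in> convex hull (\<Union>i\<in>I. vertices (shrink \<epsilon> (T i)))"
proof -
  let ?S = "shrink \<epsilon> (T k)"
  have "V \<in> tri (A k)" unfolding tri_def using V by (rule hull_inc)
  hence 1: "sqrt (1-\<epsilon>) *\<^sub>R V \<in> ?S" unfolding shrink_eq T by blast
  have "compact ?S" unfolding shrink_eq T by (intro compact_scaling tri_compact)
  moreover have "convex ?S" unfolding shrink_eq T tri_def by (intro convex_scaling convex_convex_hull)
  ultimately have "?S = convex hull {x. x extreme_point_of ?S}" by (rule Krein_Milman_Minkowski)
  also have "\<dots> \<subseteq> convex hull (\<Union>i\<in>I. vertices (shrink \<epsilon> (T i)))"
    by (rule hull_mono) (use k in \<open>auto simp: vertices_def\<close>)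
  finally show ?thesis using 1 by blast
qed

lemma lam_affine: "lam ((1-\<tau>) *\<^sub>R B + \<tau> *\<^sub>R X) V = (1-\<tau>) * lam B V + \<tau> * lam X V"
  unfolding lam_def inner_add_left inner_scaleR_left by (simp add: field_simps)

lemma tri_ok:
  assumes i: "i \<in> I" and j: "j \<in> I" and T: "\<forall>k\<in>I. T k = tri (A k)"
    and nA0: "norm A0 = 1" and vA0: "verts A0 = verts (A i)" and X: "X \<in> verts (A j)"
    and tau: "0 \<le> \<tau>" "\<tau> \<le> 1" and dpos: "1 - \<tau> + \<tau> * lam X (A0*w1) > 0" and r: "sqrt (1-\<epsilon>) > 0"
  shows "is_triangle (convex hull {sqrt (1-\<epsilon>) *\<^sub>R A0,
            sqrt (1-\<epsilon>) *\<^sub>R ((1-\<tau>) *\<^sub>R (A0*w1) + \<tau> *\<^sub>R X), sqrt (1-\<epsilon>) *\<^sub>R (A0*w2)})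
       \<and> convex hull {sqrt (1-\<epsilon>) *\<^sub>R A0,
            sqrt (1-\<epsilon>) *\<^sub>R ((1-\<tau>) *\<^sub>R (A0*w1) + \<tau> *\<^sub>R X), sqrt (1-\<epsilon>) *\<^sub>R (A0*w2)}
         \<subseteq> convex hull (\<Union>i\<in>I. vertices (shrink \<epsilon> (T i)))"
proof
  define r where "r = sqrt (1-\<epsilon>)"
  define q where "q = (1-\<tau>) *\<^sub>R (A0*w1) + \<tau> *\<^sub>R X"
  have lq: "lam q (A0*w1) = 1 - \<tau> + \<tau> * lam X (A0*w1)"
    unfolding q_def lam_affine using vert_inner(5)[OF nA0] by (simp add: lam_def)
  have "Im ((r *\<^sub>R q - r *\<^sub>R A0) * cnj (r *\<^sub>R (A0*w2) - r *\<^sub>R A0)) = r^2 * Im ((q - A0) * cnj (A0*w2 - A0))"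
    by (simp add: scaleR_conv_of_real algebra_simps power2_eq_square)
  also have "\<dots> = r^2 * (lam q (A0*w1) * (-(3 * sqrt 3 / 2)))" by (simp only: im_ident[OF nA0])
  finally have "Im ((r *\<^sub>R q - r *\<^sub>R A0) * cnj (r *\<^sub>R (A0*w2) - r *\<^sub>R A0)) \<noteq> 0"
    using lq dpos r unfolding r_def by simp
  hence "\<not> collinear {r *\<^sub>R A0, r *\<^sub>R q, r *\<^sub>R (A0*w2)}" by (rule noncol)
  thus "is_triangle (convex hull {sqrt (1-\<epsilon>) *\<^sub>R A0,
            sqrt (1-\<epsilon>) *\<^sub>R ((1-\<tau>) *\<^sub>R (A0*w1) + \<tau> *\<^sub>R X), sqrt (1-\<epsilon>) *\<^sub>R (A0*w2)})"
    unfolding is_triangle_def r_def q_def by blast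
next
  let ?P = "convex hull (\<Union>i\<in>I. vertices (shrink \<epsilon> (T i)))"
  have vi: "sqrt (1-\<epsilon>) *\<^sub>R V \<in> ?P" if "V \<in> verts A0" for V
    using vert_in_P[of i I T A V \<epsilon>] that[unfolded vA0] T i by auto
  have a: "sqrt (1-\<epsilon>) *\<^sub>R A0 \<in> ?P" by (rule vi) (simp add: verts_def)
  have b: "sqrt (1-\<epsilon>) *\<^sub>R (A0*w1) \<in> ?P" by (rule vi) (simp add: verts_def)
  have c: "sqrt (1-\<epsilon>) *\<^sub>R (A0*w2) \<in> ?P" by (rule vi) (simp add: verts_def)
  have x: "sqrt (1-\<epsilon>) *\<^sub>R X \<in> ?P" using vert_in_P[of j I T A X \<epsilon>] X T j by auto
  have "(1-\<tau>) *\<^sub>R (sqrt (1-\<epsilon>) *\<^sub>R (A0*w1)) + \<tau> *\<^sub>R (sqrt (1-\<epsilon>) *\<^sub>R X) \<in> ?P"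
    using convexD[OF convex_convex_hull b x, of "1-\<tau>" \<tau>] tau by simp
  hence q: "sqrt (1-\<epsilon>) *\<^sub>R ((1-\<tau>) *\<^sub>R (A0*w1) + \<tau> *\<^sub>R X) \<in> ?P"
    by (simp add: scaleR_add_right mult.commute)
  show "convex hull {sqrt (1-\<epsilon>) *\<^sub>R A0,
            sqrt (1-\<epsilon>) *\<^sub>R ((1-\<tau>) *\<^sub>R (A0*w1) + \<tau> *\<^sub>R X), sqrt (1-\<epsilon>) *\<^sub>R (A0*w2)} \<subseteq> ?P"
    using a q c by (intro hull_minimal) (auto simp: convex_convex_hull)
qed

lemma finish:
  assumes i: "i \<in> I" and j: "j \<in> I" and T: "\<forall>k\<in>I. T k = tri (A k)"
    and nA0: "norm A0 = 1" and vA0: "verts A0 = verts (A i)" and X: "X \<in> verts (A j)"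
    and tau: "0 \<le> \<tau>" "\<tau> \<le> 1" and dpos: "d > 0" and d: "d = 1 - \<tau> + \<tau> * lam X (A0*w1)"
    and fin: "finite S'"
    and pos: "\<forall>z\<in>S'. lam z (A0*w1) / d > 0 \<and> lam z A0 - lam z (A0*w1)/d * \<tau> * lam X A0 > 0
                 \<and> lam z (A0*w2) - lam z (A0*w1)/d * \<tau> * lam X (A0*w2) > 0"
  shows "\<forall>\<^sub>F \<epsilon> in at_right 0. ipp_yes (convex hull (\<Union>i\<in>I. vertices (shrink \<epsilon> (T i)))) S'"
  using core[OF nA0 fin dpos d pos] ev_r_pos
proof (eventually_elim)
  case (elim \<epsilon>)
  show ?case unfolding ipp_yes_def
    using tri_ok[OF i j T nA0 vA0 X tau _ elim(2)] dpos d elim(1) by blast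
qed



lemma inner_unit_bound:
  assumes "norm (x::complex) = 1" "norm y = 1"
  shows "x \<bullet> y \<le> 1" "x \<bullet> y \<ge> -1"
  using Cauchy_Schwarz_ineq2[of x y] assms by auto

lemma per_S:
  assumes n2: "n \<ge> 2" and T: "\<forall>k\<in>{1..n}. T k = tri (A k)" and nA: "\<forall>k\<in>{1..n}. norm (A k) = 1"
    and dis: "\<forall>i\<in>{1..n}. \<forall>j\<in>{1..n}. verts (A i) \<inter> verts (A j) \<noteq> {} \<longrightarrow> i = j"
    and SK: "S' \<subseteq> (\<Inter>i\<in>{1..n}. T i)" and fin: "finite S'" and c: "card S' < n"
  shows "\<forall>\<^sub>F \<epsilon> in at_right 0. ipp_yes (convex hull (\<Union>i\<in>{1..n}. vertices (shrink \<epsilon> (T i)))) S'"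
proof -
  let ?I = "{1..n}"
  have intri: "z \<in> tri (A k)" if "z \<in> S'" "k \<in> ?I" for z k
    using SK that T by auto
  have bc: "\<forall>s\<in>S'. card {k\<in>?I. bad s (A k)} \<le> 2"
    using bad_count[OF _ nA dis] by simp
  obtain i where i: "i \<in> ?I" "card {s\<in>S'. bad s (A i)} \<le> 1"
    using pigeon[OF fin c bc] by auto
  have "\<exists>j. j \<in> ?I \<and> j \<noteq> i"
  proof (cases "i = 1")
    case True thus ?thesis using n2 by (intro exI[of _ 2]) auto
  next
    case False thus ?thesis using i(1) by (intro exI[of _ 1]) auto
  qed
  then obtain j where j: "j \<in> ?I" "j \<noteq> i" by blast
  have nAi: "norm (A i) = 1" using nA i by auto
  have nAj: "norm (A j) = 1" using nA j by auto
  have lam_pos: "0 < lam z V" if "z\<in>S'" "V \<in> verts (A i)" "\<not> bad z (A i)" for z V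
  proof -
    have "0 \<le> lam z V" using that(2) intri[OF that(1) i(1)] tri_iff[OF nAi]
      unfolding verts_def by auto
    moreover have "lam z V \<noteq> 0" using that(2,3) unfolding bad_def lam_def by auto
    ultimately show ?thesis by simp
  qed
  have finB: "finite {s\<in>S'. bad s (A i)}" using fin by simp
  consider (zero) "card {s\<in>S'. bad s (A i)} = 0" | (one) "card {s\<in>S'. bad s (A i)} = 1"
    using i(2) by linarith
  then show ?thesis
  proof cases
    case zero
    hence nb: "\<forall>z\<in>S'. \<not> bad z (A i)" using finB by auto
    show ?thesis
    proof (rule finish[of i ?I i T A "A i" "A i * w1" 0 1 S'])
      show "\<forall>z\<in>S'. lam z (A i * w1) / 1 > 0 \<and> lam z (A i) - lam z (A i * w1) / 1 * 0 * lam (A i * w1) (A i) > 0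
                 \<and> lam z (A i * w2) - lam z (A i * w1) / 1 * 0 * lam (A i * w1) (A i * w2) > 0"
        using lam_pos nb by (auto simp: verts_def)
    qed (use i T nAi fin in \<open>auto simp: verts_def\<close>)
  next
    case one
    then obtain s0 where s0: "{s\<in>S'. bad s (A i)} = {s0}" by (auto simp: card_1_singleton_iff)
    hence s0S: "s0 \<in> S'" "bad s0 (A i)" and oth: "\<forall>z\<in>S'. z \<noteq> s0 \<longrightarrow> \<not> bad z (A i)" by auto
    obtain V where V: "V \<in> verts (A i)" "s0 \<bullet> V = -1/2" using s0S(2) unfolding bad_def by auto
    define A0 where "A0 = V * w1"
    have nV: "norm V = 1" using norm_verts[OF nAi V(1)] .
    have nA0: "norm A0 = 1" unfolding A0_def using nV by (simp add: norm_mult norm_w1)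
    have vA0: "verts A0 = verts (A i)" unfolding A0_def verts_rot1 using mem_verts[OF V(1)] .
    have C0: "A0 * w2 = V" unfolding A0_def by (simp add: mult.assoc w1_w2)
    have tA0: "tri A0 = tri (A i)" unfolding tri_def vA0 ..
    have "verts (A i) \<inter> verts (A j) \<noteq> {} \<longrightarrow> i = j" using dis i(1) j(1) by blast
    hence dij: "verts A0 \<inter> verts (A j) = {}" using j(2) vA0 by simp
    obtain X where X: "X \<in> verts (A j)" "lam X (A0*w2) < 0"
      using exists_beyond[OF nA0 nAj dij] by auto
    have notv: False if "s \<in> S'" "s \<in> verts A0" for s
    proof -
      have "norm s = 1" using norm_verts[OF nA0 that(2)] .
      hence "s \<in> verts (A j)" using unit_in_tri[OF nAj _ intri[OF that(1) j(1)]] by simp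
      thus False using dij that(2) by auto
    qed
    have lnn: "0 \<le> lam z A0" "0 \<le> lam z (A0*w1)" "0 \<le> lam z (A0*w2)" if "z \<in> S'" for z
      using intri[OF that i(1)] unfolding tA0[symmetric] tri_iff[OF nA0] by auto
    have lsum: "lam z A0 + lam z (A0*w1) + lam z (A0*w2) = 1" for z by (rule lam_sum)
    have s0C: "lam s0 (A0*w2) = 0" using V(2) C0 by (simp add: lam_def)
    have s0A: "0 < lam s0 A0"
    proof (rule ccontr)
      assume "\<not> 0 < lam s0 A0"
      hence "lam s0 A0 = 0" using lnn(1)[OF s0S(1)] by simp
      hence "s0 = A0 * w1" using dec[OF nA0, of s0] s0C lsum[of s0] by simp
      thus False using notv[OF s0S(1)] by (simp add: verts_def)
    qed
    have s0B: "0 < lam s0 (A0*w1)"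
    proof (rule ccontr)
      assume "\<not> 0 < lam s0 (A0*w1)"
      hence "lam s0 (A0*w1) = 0" using lnn(2)[OF s0S(1)] by simp
      hence "s0 = A0" using dec[OF nA0, of s0] s0C lsum[of s0] by simp
      thus False using notv[OF s0S(1)] by (simp add: verts_def)
    qed
    have posA: "0 < lam z A0" and posB: "0 < lam z (A0*w1)" if "z \<in> S'" for z
    proof -
      have "(0 < lam z A0) \<and> (0 < lam z (A0*w1))"
      proof (cases "z = s0")
        case True thus ?thesis using s0A s0B by simp
      next
        case False
        hence "\<not> bad z (A i)" using oth that by auto
        thus ?thesis using lam_pos[OF that] vA0 by (auto simp: verts_def)
      qed
      thus "0 < lam z A0" "0 < lam z (A0*w1)" by auto
    qed
    define m where "m = Min ((\<lambda>z. lam z A0) ` S')"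
    have m: "m > 0" unfolding m_def
      by (rule Min_gr_iff[THEN iffD2]) (use fin s0S(1) posA in auto)
    have mle: "m \<le> lam z A0" if "z \<in> S'" for z unfolding m_def using fin that by auto
    define \<tau> where "\<tau> = min (1/2) (m/4)"
    have tau: "0 < \<tau>" "\<tau> \<le> 1/2" "\<tau> \<le> m/4" unfolding \<tau>_def using m by auto
    have nX: "norm X = 1" using norm_verts[OF nAj X(1)] .
    have nB0: "norm (A0*w1) = 1" using nA0 by (simp add: norm_mult norm_w1)
    have xB: "lam X (A0*w1) \<ge> -1/3" using inner_unit_bound(2)[OF nX nB0] by (simp add: lam_def)
    have xA: "lam X A0 \<le> 1" using inner_unit_bound(1)[OF nX nA0] by (simp add: lam_def)
    define d where "d = 1 - \<tau> + \<tau> * lam X (A0*w1)"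
    have d3: "d \<ge> 1/3"
    proof -
      have "\<tau> * lam X (A0*w1) \<ge> \<tau> * (-1/3)" using xB tau by (intro mult_left_mono) auto
      thus ?thesis unfolding d_def using tau by linarith
    qed
    show ?thesis
    proof (rule finish[of i ?I j T A A0 X \<tau> d S'])
      show "\<forall>z\<in>S'. lam z (A0*w1) / d > 0 \<and> lam z A0 - lam z (A0*w1)/d * \<tau> * lam X A0 > 0
                 \<and> lam z (A0*w2) - lam z (A0*w1)/d * \<tau> * lam X (A0*w2) > 0"
      proof
        fix z assume z: "z \<in> S'"
        define \<beta> where "\<beta> = lam z (A0*w1) / d"
        have b1: "lam z (A0*w1) \<le> 1" using lnn[OF z] lsum[of z] by linarith
        have bp: "\<beta> > 0" unfolding \<beta>_def using posB[OF z] d3 by simp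
        have b3: "\<beta> \<le> 3" unfolding \<beta>_def using b1 d3 by (simp add: divide_le_eq)
        have "\<beta> * \<tau> * lam X A0 \<le> \<beta> * \<tau> * 1"
          using xA bp tau by (intro mult_left_mono) auto
        also have "\<dots> \<le> 3 * \<tau>" using mult_right_mono[OF b3, of \<tau>] tau by simp
        finally have "\<beta> * \<tau> * lam X A0 < lam z A0" using tau mle[OF z] m by linarith
        moreover have "\<beta> * \<tau> * lam X (A0*w2) < 0"
          using bp tau X(2) by (simp add: mult_pos_neg)
        ultimately show "lam z (A0*w1) / d > 0 \<and> lam z A0 - lam z (A0*w1)/d * \<tau> * lam X A0 > 0
                 \<and> lam z (A0*w2) - lam z (A0*w1)/d * \<tau> * lam X (A0*w2) > 0"
          using bp lnn(3)[OF z] unfolding \<beta>_def by auto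
      qed
    qed (use i j T nA0 vA0 X tau d3 fin d_def in auto)
  qed
qed



theorem mainTheorem14:
  fixes n :: nat and T :: "nat \<Rightarrow> complex set"
  assumes "n \<ge> 2"
    and "\<forall>i\<in>{1..n}. T i \<in> EE"
    and "inj_on T {1..n}"
  shows "\<exists>\<epsilon>0>0. \<forall>\<epsilon>. 0 < \<epsilon> \<and> \<epsilon> < \<epsilon>0 \<longrightarrow>
           (\<forall>S'. S' \<subseteq> vertices (\<Inter>i\<in>{1..n}. T i) \<and> card S' < n \<longrightarrow>
              ipp_yes (convex hull (\<Union>i\<in>{1..n}. vertices (shrink \<epsilon> (T i)))) S')"
proof -
  let ?I = "{1..n}"
  have "\<forall>i\<in>?I. \<exists>A. norm A = 1 \<and> T i = tri A" using assms(2) EE_tri by blast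
  then obtain A where A: "\<forall>i\<in>?I. norm (A i) = 1 \<and> T i = tri (A i)" by metis
  have TA: "\<forall>k\<in>?I. T k = tri (A k)" and nA: "\<forall>k\<in>?I. norm (A k) = 1" using A by auto
  have dis: "\<forall>i\<in>?I. \<forall>j\<in>?I. verts (A i) \<inter> verts (A j) \<noteq> {} \<longrightarrow> i = j"
  proof (intro ballI impI)
    fix i j assume ij: "i \<in> ?I" "j \<in> ?I" "verts (A i) \<inter> verts (A j) \<noteq> {}"
    then obtain V where "V \<in> verts (A i)" "V \<in> verts (A j)" by blast
    hence "verts (A i) = verts (A j)" by (rule shared)
    hence "T i = T j" using TA ij by (simp add: tri_def)
    thus "i = j" using assms(3) ij unfolding inj_on_def by blast
  qed
  define K where "K = (\<Inter>i\<in>?I. T i)"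
  have "polyhedron K" unfolding K_def
  proof (rule polyhedron_Inter)
    show "finite (T ` ?I)" by simp
    fix S assume "S \<in> T ` ?I"
    then obtain k where "k \<in> ?I" "S = T k" by blast
    hence "S = convex hull (verts (A k))" using TA by (simp add: tri_def)
    thus "polyhedron S" by (simp add: polytope_imp_polyhedron polytope_convex_hull verts_def)
  qed
  hence finV: "finite (vertices K)" unfolding vertices_def by (rule finite_polyhedron_extreme_points)
  define F where "F = {S'. S' \<subseteq> vertices K \<and> card S' < n}"
  have "F \<subseteq> Pow (vertices K)" unfolding F_def by auto
  hence finF: "finite F" using finite_Pow_iff[THEN iffD2, OF finV] by (rule finite_subset)
  have "\<forall>S'\<in>F. \<forall>\<^sub>F \<epsilon> in at_right 0. ipp_yes (convex hull (\<Union>i\<in>?I. vertices (shrink \<epsilon> (T i)))) S'"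
  proof
    fix S' assume "S' \<in> F"
    hence S': "S' \<subseteq> vertices K" "card S' < n" unfolding F_def by auto
    have "S' \<subseteq> K" using S'(1) unfolding vertices_def extreme_point_of_def by auto
    moreover have "finite S'" using S'(1) finV by (rule finite_subset)
    ultimately show "\<forall>\<^sub>F \<epsilon> in at_right 0. ipp_yes (convex hull (\<Union>i\<in>?I. vertices (shrink \<epsilon> (T i)))) S'"
      using per_S[OF assms(1) TA nA dis _ _ S'(2)] unfolding K_def by blast
  qed
  hence "\<forall>\<^sub>F \<epsilon> in at_right 0. \<forall>S'\<in>F. ipp_yes (convex hull (\<Union>i\<in>?I. vertices (shrink \<epsilon> (T i)))) S'"
    by (rule eventually_ball_finite[OF finF])
  then obtain b :: real where b: "b > 0" "\<forall>y>0. y < b \<longrightarrow> (\<forall>S'\<in>F. ipp_yes (convex hull (\<Union>i\<in>?I. vertices (shrink y (T i)))) S')"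
    unfolding eventually_at_right_field by auto
  show ?thesis
    using b unfolding F_def K_def by blast
qed


end
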